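(* Let $n\ge5$ and let $\varrho:H_n\to\mathcal L$ be a homomorphism. For $p\in\overline{\mathrm B}W$ put $p_0:=p$ and $p_i:=\varrho(r_i)p_{i-1}$ for $i=1,\dots,n$ (so $p_n=p_0$), and $\mathrm{Area}(p;\varrho):=\mathrm{Area}(p_1,p_2,\dots,p_n)$. Then $\mathrm{Area}(p;\varrho)$ does not depend on the choice of $p\in\overline{\mathrm B}W$. Moreover, if $\varrho(r_i)\ne1$ for all $i$, then $\mathrm{Area}(p;\varrho)\equiv n\pi\pmod{2\pi}$.
   Context: Let $W$ be a 2-dimensional complex vector space with a hermitian form $\langle\cdot,\cdot\rangle$ of signature $(+,-)$. In $\mathbb{CP}W$ let $\mathrm BW$ be the set of negative points (the Poincaré disc, with hyperbolic metric of curvature $-1$ and the orientation given by its complex structure), $\mathrm SW$ the set of isotropic points (its ideal boundary), and $\overline{\mathrm B}W=\mathrm BW\cup\mathrm SW$. Let $\mathcal L=\mathrm{PU}(W)$ be the group of orientation-preserving isometries of $\mathrm BW$ (it acts on $\overline{\mathrm B}W$). For $p_1,p_2,p_3\in\overline{\mathrm B}W$ the oriented area is $\mathrm{Area}\,\Delta(p_1,p_2,p_3)=2\arg\big(-\langle p_1,p_2\rangle\langle p_2,p_3\rangle\langle p_3,p_1\rangle\big)$ (with $\arg\in[-\pi,\pi]$, computed with any representatives in $W$) when no two vertices are equal isotropic points, and $0$ otherwise; it is the signed area of the geodesic triangle, positive for vertices in counterclockwise order. For $p_1,\dots,p_m\in\overline{\mathrm B}W$, $\mathrm{Area}(p_1,\dots,p_m):=\sum_{k=1}^m\mathrm{Area}\,\Delta(c,p_k,p_{k+1})$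 (indices mod $m$) for any $c\in\overline{\mathrm B}W$; this is independent of $c$. For $n\ge5$, $H_n$ is the group generated by $r_1,\dots,r_n$ with defining relations $r_i^2=1$ ($i=1,\dots,n$) and $r_nr_{n-1}\cdots r_2r_1=1$. *)

theory Defs
  imports "HOL-Analysis.Analysis"
begin

text \<open>W = C^2 with the hermitian form of signature (+,-).
  Points of CP W are represented by nonzero vectors of W.\<close>

type_synonym vecW = "complex ^ 2"
type_synonym matW = "complex ^ 2 ^ 2"

definition herm :: "vecW \<Rightarrow> vecW \<Rightarrow> complex" where
  "herm u v = u $ 1 * cnj (v $ 1) - u $ 2 * cnj (v $ 2)"

definition closed_ball_W :: "vecW \<Rightarrow> bool" where
  "closed_ball_W p \<longleftrightarrow> p \<noteq> 0 \<and> Re (herm p p) \<le> 0"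

definition isotropic :: "vecW \<Rightarrow> bool" where
  "isotropic p \<longleftrightarrow> p \<noteq> 0 \<and> herm p p = 0"

definition proj_eq :: "vecW \<Rightarrow> vecW \<Rightarrow> bool" where
  "proj_eq u v \<longleftrightarrow> (\<exists>c. c \<noteq> 0 \<and> u = c *s v)"

text \<open>Elements of L = PU(W) are represented by matrices preserving the form;
  two matrices represent the same element iff they are proportional.
  In particular an element is the identity iff it is a scalar matrix.\<close>
definition unitaryW :: "matW \<Rightarrow> bool" where
  "unitaryW A \<longleftrightarrow> (\<forall>u v. herm (A *v u) (A *v v) = herm u v)"

definition is_scalar :: "matW \<Rightarrow> bool" where
  "is_scalar A \<longleftrightarrow> (\<exists>c. A = mat c)"

definition tri_area :: "vecW \<Rightarrow> vecW \<Rightarrow> vecW \<Rightarrow> real" where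
  "tri_area p1 p2 p3 =
     (if (isotropic p1 \<and> proj_eq p1 p2) \<or> (isotropic p2 \<and> proj_eq p2 p3)
         \<or> (isotropic p3 \<and> proj_eq p3 p1)
      then 0
      else 2 * Arg (- (herm p1 p2 * herm p2 p3 * herm p3 p1)))"

text \<open>The centre of the disc, used as the auxiliary point c (the area is independent of c).\<close>
definition centreW :: vecW where
  "centreW = (\<chi> i. if i = 2 then 1 else 0)"

definition poly_area :: "vecW list \<Rightarrow> real" where
  "poly_area ps = (\<Sum>k<length ps. tri_area centreW (ps ! k) (ps ! ((k + 1) mod length ps)))"

text \<open>A homomorphism H_n \<rightarrow> L is given by images R 1, ..., R n of the generators
  satisfying the defining relations (up to scalars): R i ^2 = 1 and R n ... R 1 = 1 in PU(W).\<close>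
fun gen_prod :: "(nat \<Rightarrow> matW) \<Rightarrow> nat \<Rightarrow> matW" where
  "gen_prod R 0 = mat 1"
| "gen_prod R (Suc k) = R (Suc k) ** gen_prod R k"

definition is_Hn_rep :: "nat \<Rightarrow> (nat \<Rightarrow> matW) \<Rightarrow> bool" where
  "is_Hn_rep n R \<longleftrightarrow>
     (\<forall>i\<in>{1..n}. unitaryW (R i) \<and> is_scalar (R i ** R i)) \<and> is_scalar (gen_prod R n)"

fun orbit_pts :: "(nat \<Rightarrow> matW) \<Rightarrow> vecW \<Rightarrow> nat \<Rightarrow> vecW" where
  "orbit_pts R p 0 = p"
| "orbit_pts R p (Suc i) = R (Suc i) *v orbit_pts R p i"

definition area_rep :: "nat \<Rightarrow> (nat \<Rightarrow> matW) \<Rightarrow> vecW \<Rightarrow> real" where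
  "area_rep n R p = poly_area (map (orbit_pts R p) [1..<n+1])"

end

theory Submission
  imports Defs
begin



lemma mv1: "((A::matW) *v x) $ 1 = A$1$1 * x$1 + A$1$2 * x$2"
  by (simp add: matrix_vector_mult_def sum_2)
lemma mv2: "((A::matW) *v x) $ 2 = A$2$1 * x$1 + A$2$2 * x$2"
  by (simp add: matrix_vector_mult_def sum_2)
lemma mm: "((A::matW) ** B) $ i $ j = A$i$1 * B$1$j + A$i$2 * B$2$j"
  by (simp add: matrix_matrix_mult_def sum_2)

lemma herm_cnj: "cnj (herm u v) = herm v u"
  by (simp add: herm_def)
lemma herm_scaleL: "herm (c *s u) v = c * herm u v"
  by (simp add: herm_def algebra_simps)
lemma herm_scaleR: "herm u (c *s v) = cnj c * herm u v"
  by (simp add: herm_def algebra_simps)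
lemma herm_self: "herm u u = of_real ((cmod (u$1))^2 - (cmod (u$2))^2)"
  by (simp only: herm_def complex_norm_square of_real_diff)
lemma cmod_cnj_sq: "z * cnj z = of_real ((cmod z)^2)"
  by (simp only: complex_norm_square)

lemma cb_comp: assumes "closed_ball_W x" shows "cmod (x$1) \<le> cmod (x$2)" "x$2 \<noteq> 0"
proof -
  have "Re (herm x x) \<le> 0" "x \<noteq> 0" using assms by (auto simp: closed_ball_W_def)
  hence h: "(cmod (x$1))^2 \<le> (cmod (x$2))^2" by (simp add: herm_self)
  thus "cmod (x$1) \<le> cmod (x$2)" by (simp add: power_mono_iff)
  show "x$2 \<noteq> 0"
  proof
    assume "x$2 = 0"
    with h have "x$1 = 0" by simp
    with \<open>x$2 = 0\<close> \<open>x \<noteq> 0\<close> show False by (metis (mono_tags) exhaust_2 vec_eq_iff zero_index)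
  qed
qed

definition negW :: "vecW \<Rightarrow> bool" where "negW d \<longleftrightarrow> Re (herm d d) < 0"

lemma neg_comp: assumes "negW d" shows "cmod (d$1) < cmod (d$2)"
proof -
  have "(cmod (d$1))^2 < (cmod (d$2))^2" using assms by (simp add: negW_def herm_self)
  thus ?thesis by (simp add: power_less_imp_less_base)
qed

lemma neg_cb: "negW d \<Longrightarrow> closed_ball_W d"
  by (auto simp: negW_def closed_ball_W_def herm_def)

lemma neg_orth: assumes "negW d" "closed_ball_W x" shows "herm d x \<noteq> 0"
proof
  assume h: "herm d x = 0"
  have a: "cmod (d$1) < cmod (d$2)" using neg_comp assms(1) .
  have b: "cmod (x$1) \<le> cmod (x$2)" "x$2 \<noteq> 0" using cb_comp assms(2) by auto
  from h have "d$1 * cnj (x$1) = d$2 * cnj (x$2)" by (simp add: herm_def)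
  hence "cmod (d$1) * cmod (x$1) = cmod (d$2) * cmod (x$2)" by (metis complex_mod_cnj norm_mult)
  moreover have "cmod (d$1) * cmod (x$1) \<le> cmod (d$1) * cmod (x$2)" using b by (simp add: mult_left_mono)
  moreover have "cmod (d$1) * cmod (x$2) < cmod (d$2) * cmod (x$2)" using a b by simp
  ultimately show False by linarith
qed

lemma cmod_sq': "(complex_of_real (cmod z))^2 = z * cnj z"
  by (metis complex_norm_square of_real_power)

definition W3 :: "vecW \<Rightarrow> vecW \<Rightarrow> vecW \<Rightarrow> complex" where
  "W3 u v w = -(herm u v * herm v w * herm w u)"

lemma W3_cyc: "W3 u v w = W3 v w u"
  by (simp add: W3_def mult_ac)
lemma W3_swap: "W3 u w v = cnj (W3 u v w)"
  by (simp add: W3_def herm_cnj mult_ac)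
lemma W3_scale1: "W3 (t *s u) v w = of_real ((cmod t)^2) * W3 u v w"
  unfolding W3_def herm_scaleL herm_scaleR complex_norm_square by (simp add: mult_ac)
lemma W3_scale2: "W3 u (t *s v) w = of_real ((cmod t)^2) * W3 u v w"
  using W3_scale1[of t v w u] W3_cyc by metis
lemma W3_scale3: "W3 u v (t *s w) = of_real ((cmod t)^2) * W3 u v w"
  using W3_scale1[of t w u v] W3_cyc by metis
lemma W3_unitary: "unitaryW A \<Longrightarrow> W3 (A *v u) (A *v v) (A *v w) = W3 u v w"
  by (simp add: W3_def unitaryW_def)

lemma centre_comp [simp]: "centreW $ 1 = 0" "centreW $ 2 = 1"
  by (simp_all add: centreW_def)

lemma I0: assumes "closed_ball_W x" "closed_ball_W y"
  shows "0 < Re (W3 centreW x y) \<or> W3 centreW x y = 0"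
proof -
  define N where "N = (cmod (x$2))^2 * (cmod (y$2))^2"
  define P where "P = cnj (x$2) * y$2 * x$1 * cnj (y$1)"
  have eq: "W3 centreW x y = of_real N - P"
    unfolding W3_def herm_def N_def P_def
    by (simp only: of_real_mult complex_norm_square) (simp add: algebra_simps)
  have x: "cmod (x$1) \<le> cmod (x$2)" and y: "cmod (y$1) \<le> cmod (y$2)"
    using cb_comp assms by auto
  have "cmod P = cmod (x$1) * cmod (y$1) * (cmod (x$2) * cmod (y$2))"
    by (simp add: P_def norm_mult)
  also have "\<dots> \<le> (cmod (x$2) * cmod (y$2)) * (cmod (x$2) * cmod (y$2))"
    by (intro mult_right_mono mult_mono x y) auto
  finally have PN: "cmod P \<le> N" by (simp add: N_def power2_eq_square mult_ac)
  show ?thesis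
  proof (cases "0 < Re (W3 centreW x y)")
    case False
    hence "N \<le> Re P" using eq by simp
    moreover have "Re P \<le> cmod P" by (rule complex_Re_le_cmod)
    ultimately have r: "Re P = cmod P" "Re P = N" using PN by linarith+
    have "(cmod P)^2 = (Re P)^2 + (Im P)^2" by (simp add: cmod_power2)
    hence "Im P = 0" using r by simp
    hence "P = of_real N" using r by (simp add: complex_eq_iff)
    thus ?thesis using eq by simp
  qed simp
qed



definition Tm :: "vecW \<Rightarrow> vecW \<Rightarrow> vecW" where
  "Tm c u = (\<chi> i. if i = 1 then c$2 * u$1 - c$1 * u$2 else - cnj (c$1) * u$1 + cnj (c$2) * u$2)"

lemma Tm_comp [simp]: "Tm c u $ 1 = c$2 * u$1 - c$1 * u$2" "Tm c u $ 2 = - cnj (c$1) * u$1 + cnj (c$2) * u$2"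
  by (simp_all add: Tm_def)

lemma herm_Tm: "herm (Tm c u) (Tm c v) = (c$2 * cnj (c$2) - c$1 * cnj (c$1)) * herm u v"
  by (simp add: herm_def algebra_simps)

lemma Tm_c: "Tm c c = (c$2 * cnj (c$2) - c$1 * cnj (c$1)) *s centreW"
  by (simp add: vec_eq_iff forall_2 mult_ac)

lemma e1e2: "herm u (\<chi> i. if i = 1 then 1 else 0) = u$1" "herm u (\<chi> i. if i = 1 then 0 else 1) = - u$2"
  by (simp_all add: herm_def)



lemma I: assumes "negW c" "closed_ball_W x" "closed_ball_W y"
  shows "0 < Re (W3 c x y) \<or> W3 c x y = 0"
proof -
  define k where "k = (cmod (c$2))^2 - (cmod (c$1))^2"
  have kk: "c$2 * cnj (c$2) - c$1 * cnj (c$1) = of_real k"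
    by (simp only: k_def of_real_diff complex_norm_square)
  have kpos: "0 < k" using assms(1) by (simp add: k_def negW_def herm_self)
  have hT: "herm (Tm c u) (Tm c v) = of_real k * herm u v" for u v
    using herm_Tm[of c u v] kk by simp
  have h0: "herm 0 w = 0" for w by (simp add: herm_def)
  have Tnz: "Tm c u \<noteq> 0" if "u \<noteq> 0" for u
  proof
    assume "Tm c u = 0"
    hence "of_real k * herm u v = 0" for v using hT[of u v] h0 by simp
    hence "herm u v = 0" for v using kpos by simp
    hence "u$1 = 0" "u$2 = 0" using e1e2[of u] by (metis, metis neg_equal_0_iff_equal)
    thus False using that by (simp add: vec_eq_iff forall_2)
  qed
  have cbT: "closed_ball_W (Tm c u)" if "closed_ball_W u" for u
  proof -
    have "Re (herm u u) \<le> 0" "u \<noteq> 0" using that by (auto simp: closed_ball_W_def)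
    moreover have "Re (herm (Tm c u) (Tm c u)) = k * Re (herm u u)" using hT[of u u] by simp
    ultimately show ?thesis using Tnz kpos by (simp add: closed_ball_W_def mult_nonneg_nonpos)
  qed
  have e1: "W3 (Tm c c) (Tm c x) (Tm c y) = of_real k * of_real k * of_real k * W3 c x y"
    unfolding W3_def hT by (simp add: mult_ac)
  have e2: "W3 (Tm c c) (Tm c x) (Tm c y) = of_real k * of_real k * W3 centreW (Tm c x) (Tm c y)"
    unfolding Tm_c kk W3_scale1 by (simp add: cmod_sq' power2_eq_square)
  have "of_real k * W3 c x y = W3 centreW (Tm c x) (Tm c y)"
    using e1 e2 kpos by (simp add: mult.assoc)
  hence e: "W3 c x y = of_real (1/k) * W3 centreW (Tm c x) (Tm c y)"
    using kpos by (simp add: field_simps)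
  from I0[OF cbT[OF assms(2)] cbT[OF assms(3)]] show ?thesis
    unfolding e using kpos by auto
qed



lemma cos_pos_range: assumes "0 < cos x" "-pi < x" "x \<le> pi" shows "\<bar>x\<bar> < pi/2"
proof (rule ccontr)
  assume "\<not> \<bar>x\<bar> < pi/2"
  hence a: "pi/2 \<le> \<bar>x\<bar>" "\<bar>x\<bar> \<le> pi" using assms by auto
  have "cos \<bar>x\<bar> \<le> 0"
  proof (cases "\<bar>x\<bar> = pi/2")
    case False thus ?thesis using a cos_lt_zero_pi[of "\<bar>x\<bar>"] by auto
  next
    case True
    hence "cos \<bar>x\<bar> = cos (pi/2)" by (simp only:)
    thus ?thesis by (simp only: cos_pi_half)
  qed
  moreover have "cos \<bar>x\<bar> = cos x" by (cases "0 \<le> x") auto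
  ultimately show False using assms by simp
qed

lemma arg_small: assumes "0 < Re z \<or> z = 0" shows "\<bar>Arg z\<bar> < pi/2"
proof (cases "z = 0")
  case True thus ?thesis by (simp add: Arg_zero)
next
  case False
  hence "0 < Re z" using assms by auto
  have "cis (Arg z) = sgn z" using cis_Arg False by simp
  hence "cos (Arg z) = Re z / cmod z" by (metis Re_sgn cis.sel(1))
  hence "0 < cos (Arg z)" using \<open>0 < Re z\<close> False by simp
  thus ?thesis using cos_pos_range Arg_bounded by blast
qed

lemma arg_cnj_small: assumes "\<bar>Arg z\<bar> < pi/2" shows "Arg (cnj z) = - Arg z"
proof (cases "z \<in> \<real>")
  case True
  hence "Arg z = 0 \<or> Arg z = pi" using Arg_real by auto
  hence "Arg z = 0" using assms pi_gt_zero by auto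
  thus ?thesis using Arg_cnj True by simp
qed (simp add: Arg_cnj)

lemma cis_eq_small: assumes "cis a = cis b" "\<bar>a - b\<bar> < 2*pi" shows "a = b"
proof -
  have "cis (a - b) = 1" using assms(1) cis_divide[of a b] by simp
  hence "cos (a - b) = 1" by (metis cis.sel(1) one_complex.sel(1))
  then obtain m :: int where m: "a - b = of_int m * 2 * pi" using cos_one_2pi_int by blast
  hence "\<bar>real_of_int m\<bar> * (2*pi) < 2 * pi" using assms(2) by (simp add: abs_mult)
  hence "\<bar>real_of_int m\<bar> < 1" by simp
  hence "m = 0" by linarith
  thus ?thesis using m by simp
qed

lemma arg_sum3: assumes "z1 * z2 * z3 = of_real r * z0" "0 < r" "z0 \<noteq> 0"
  "\<bar>Arg z0\<bar> < pi/2" "\<bar>Arg z1\<bar> < pi/2" "\<bar>Arg z2\<bar> < pi/2" "\<bar>Arg z3\<bar> < pi/2"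
  shows "Arg z0 = Arg z1 + Arg z2 + Arg z3"
proof -
  have nz: "z1 \<noteq> 0" "z2 \<noteq> 0" "z3 \<noteq> 0" using assms(1-3) by auto
  have "cis (Arg z1 + Arg z2 + Arg z3) = sgn z1 * sgn z2 * sgn z3"
    using nz by (simp add: cis_mult[symmetric] cis_Arg)
  also have "\<dots> = sgn (z1 * z2 * z3)" by (simp add: sgn_mult)
  also have "\<dots> = sgn (of_real r * z0)" using assms(1) by simp
  also have "\<dots> = sgn z0" using assms(2) by (simp add: sgn_mult sgn_of_real)
  also have "\<dots> = cis (Arg z0)" using assms(3) by (simp add: cis_Arg)
  finally show ?thesis using assms(4-7) by (intro cis_eq_small[symmetric]) auto
qed




lemma Arg_scale: "t \<noteq> 0 \<Longrightarrow> Arg (of_real ((cmod t)^2) * z) = Arg z"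
  by (rule Arg_times_of_real) simp

lemma W3_small: "negW c \<Longrightarrow> closed_ball_W x \<Longrightarrow> closed_ball_W y \<Longrightarrow> \<bar>Arg (W3 c x y)\<bar> < pi/2"
  using I arg_small by blast

lemma W3_anti: "negW c \<Longrightarrow> closed_ball_W x \<Longrightarrow> closed_ball_W y \<Longrightarrow> Arg (W3 c y x) = - Arg (W3 c x y)"
  using W3_small arg_cnj_small W3_swap by metis

lemma orth_proj: assumes "closed_ball_W x" "closed_ball_W y" "herm x y = 0"
  shows "\<exists>t. t \<noteq> 0 \<and> y = t *s x"
proof -
  have x: "cmod (x$1) \<le> cmod (x$2)" "x$2 \<noteq> 0" and y: "cmod (y$1) \<le> cmod (y$2)" "y$2 \<noteq> 0"
    using cb_comp assms by auto
  have e: "x$1 * cnj (y$1) = x$2 * cnj (y$2)" using assms(3) by (simp add: herm_def)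
  hence "cmod (x$1) * cmod (y$1) = cmod (x$2) * cmod (y$2)" by (metis complex_mod_cnj norm_mult)
  moreover have "cmod (x$1) * cmod (y$1) \<le> cmod (x$2) * cmod (y$1)" using x by (simp add: mult_right_mono)
  moreover have "cmod (x$2) * cmod (y$1) \<le> cmod (x$2) * cmod (y$2)" using y by (simp add: mult_left_mono)
  ultimately have "cmod (x$2) * cmod (y$1) = cmod (x$2) * cmod (y$2)" by linarith
  hence yy: "cmod (y$1) = cmod (y$2)" using x by simp
  hence "y$1 * cnj (y$1) = y$2 * cnj (y$2)" by (simp add: complex_norm_square[symmetric])
  have "x$1 * (y$2 * cnj (y$2)) = x$1 * (y$1 * cnj (y$1))" using \<open>y$1 * cnj (y$1) = y$2 * cnj (y$2)\<close> by simp
  also have "\<dots> = y$1 * (x$2 * cnj (y$2))" using e by (simp add: mult_ac)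
  finally have "(x$1 * y$2) * cnj (y$2) = (y$1 * x$2) * cnj (y$2)" by (simp add: mult_ac)
  hence f: "x$1 * y$2 = y$1 * x$2" using y by simp
  define t where "t = y$2 / x$2"
  have "y = t *s x"
    using f x y by (simp add: vec_eq_iff forall_2 t_def field_simps)
  moreover have "t \<noteq> 0" using x y by (simp add: t_def)
  ultimately show ?thesis by blast
qed

lemma cocycle: assumes "negW c" "negW d" "closed_ball_W x" "closed_ball_W y"
  shows "Arg (W3 c x y) = Arg (W3 d c x) + Arg (W3 d x y) + Arg (W3 d y c)"
proof (cases "herm x y = 0")
  case False
  have cb: "closed_ball_W c" using assms(1) neg_cb by blast
  have nz: "herm d c \<noteq> 0" "herm d x \<noteq> 0" "herm d y \<noteq> 0" "herm c x \<noteq> 0" "herm c y \<noteq> 0"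
    using neg_orth assms cb by auto
  hence nz2: "herm y c \<noteq> 0" by (metis herm_cnj complex_cnj_zero_iff)
  define r where "r = (cmod (herm d c))^2 * (cmod (herm d x))^2 * (cmod (herm d y))^2"
  have r: "0 < r" using nz by (simp add: r_def)
  have "W3 d c x * W3 d x y * W3 d y c = of_real r * W3 c x y"
    unfolding W3_def r_def of_real_mult complex_norm_square
    by (simp add: herm_cnj[symmetric, of d c] herm_cnj[symmetric, of d x] herm_cnj[symmetric, of d y] mult_ac)
  moreover have "W3 c x y \<noteq> 0" using nz nz2 False by (simp add: W3_def)
  ultimately show ?thesis
    using arg_sum3 r W3_small assms cb W3_cyc by metis
next
  case True
  then obtain t where t: "t \<noteq> 0" "y = t *s x" using orth_proj assms by blast
  have cb: "closed_ball_W c" using assms(1) neg_cb by blast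
  have "W3 c x y = 0" "W3 d x y = 0" using True by (simp_all add: W3_def)
  moreover have "Arg (W3 d y c) = - Arg (W3 d c x)"
  proof -
    have "W3 d y c = of_real ((cmod t)^2) * W3 d x c" using t by (simp add: W3_scale2)
    hence "Arg (W3 d y c) = Arg (W3 d x c)" using t Arg_scale by metis
    also have "\<dots> = - Arg (W3 d c x)" using W3_anti assms cb by blast
    finally show ?thesis .
  qed
  ultimately show ?thesis by (simp add: Arg_zero)
qed



definition Q :: "vecW \<Rightarrow> vecW \<Rightarrow> vecW \<Rightarrow> vecW \<Rightarrow> vecW \<Rightarrow> real" where
  "Q c a b e g = Arg (W3 c a b) + Arg (W3 c b e) + Arg (W3 c e g) + Arg (W3 c g a)"

lemma Q_base: assumes "negW c" "negW d" "closed_ball_W a" "closed_ball_W b" "closed_ball_W e" "closed_ball_W g"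
  shows "Q c a b e g = Q d a b e g"
proof -
  have cb: "closed_ball_W c" using assms(1) neg_cb by blast
  have k: "Arg (W3 c x y) = Arg (W3 d c x) + Arg (W3 d x y) - Arg (W3 d c y)"
    if "closed_ball_W x" "closed_ball_W y" for x y
    using cocycle[OF assms(1,2) that] W3_anti[OF assms(2) that(2) cb] by simp
  show ?thesis unfolding Q_def using k assms by simp
qed

lemma unit_nz: assumes "unitaryW A" "v \<noteq> 0" shows "A *v v \<noteq> 0"
proof
  assume h: "A *v v = 0"
  have "herm v u = 0" for u using assms(1) h unfolding unitaryW_def
    by (metis (no_types) herm_def mult_zero_left diff_self zero_index)
  hence "v$1 = 0" "v$2 = 0" using e1e2[of v] by (metis, metis neg_equal_0_iff_equal)
  thus False using assms(2) by (simp add: vec_eq_iff forall_2)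
qed

lemma unit_cb: "unitaryW A \<Longrightarrow> closed_ball_W v \<Longrightarrow> closed_ball_W (A *v v)"
  using unit_nz by (auto simp: closed_ball_W_def unitaryW_def)

lemma unit_neg: "unitaryW A \<Longrightarrow> negW v \<Longrightarrow> negW (A *v v)"
  by (auto simp: negW_def unitaryW_def)


lemma quad_zero: assumes "unitaryW S" "S ** S = mat \<mu>" "negW c" "closed_ball_W a" "closed_ball_W b"
  shows "Q c a (S *v a) (S *v b) b = 0"
proof -
  have cbs: "closed_ball_W (S *v a)" "closed_ball_W (S *v b)" using unit_cb assms by auto
  have nc: "negW (S *v c)" using unit_neg assms by auto
  have SS: "S *v (S *v v) = \<mu> *s v" for v
    by (simp add: matrix_vector_mul_assoc assms(2) vec_eq_iff forall_2 mv1 mv2 mat_def)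
  have "\<mu> *s a \<noteq> 0" using SS[of a] unit_nz assms cbs by (metis closed_ball_W_def)
  hence mu: "\<mu> \<noteq> 0" by auto
  have "Q c a (S *v a) (S *v b) b = Q (S *v c) (S *v a) (S *v (S *v a)) (S *v (S *v b)) (S *v b)"
    unfolding Q_def W3_unitary[OF assms(1)] ..
  also have "\<dots> = Q (S *v c) (S *v a) a b (S *v b)"
    unfolding SS Q_def W3_scale1 W3_scale2 W3_scale3 Arg_scale[OF mu] ..
  also have "\<dots> = Q c (S *v a) a b (S *v b)"
    using Q_base[OF nc assms(3)] cbs assms by simp
  also have "\<dots> = - Q c a (S *v a) (S *v b) b"
    unfolding Q_def using W3_anti[OF assms(3) assms(4) cbs(1)] W3_anti[OF assms(3) assms(4) assms(5)]
      W3_anti[OF assms(3) cbs(2) assms(5)] W3_anti[OF assms(3) cbs(1) cbs(2)] by simp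
  finally show ?thesis by simp
qed

lemma key: assumes "unitaryW S" "S ** S = mat \<mu>" "negW c" "closed_ball_W a" "closed_ball_W b"
  shows "Arg (W3 c a (S *v a)) + Arg (W3 c (S *v a) (S *v b)) = Arg (W3 c b (S *v b)) + Arg (W3 c a b)"
proof -
  have cbs: "closed_ball_W (S *v a)" "closed_ball_W (S *v b)" using unit_cb assms by auto
  show ?thesis using quad_zero[OF assms] W3_anti[OF assms(3) assms(4) assms(5)]
      W3_anti[OF assms(3) cbs(2) assms(5)] unfolding Q_def by simp
qed




lemma tri_area_eq: "tri_area u v w = 2 * Arg (W3 u v w)"
proof -
  have z: "herm x y = 0" if i: "isotropic x" and pe: "proj_eq x y" for x y
  proof -
    obtain t where t: "t \<noteq> 0" "x = t *s y" using pe by (auto simp: proj_eq_def)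
    have "herm x x = t * cnj t * herm y y" using t by (simp add: herm_scaleL herm_scaleR)
    hence "herm y y = 0" using i t by (simp add: isotropic_def)
    thus ?thesis using t by (simp add: herm_scaleL)
  qed
  show ?thesis
  proof (cases "(isotropic u \<and> proj_eq u v) \<or> (isotropic v \<and> proj_eq v w) \<or> (isotropic w \<and> proj_eq w u)")
    case True
    hence "W3 u v w = 0" using z by (auto simp: W3_def)
    thus ?thesis using True by (simp add: tri_area_def Arg_zero)
  next
    case False thus ?thesis unfolding tri_area_def W3_def by (simp only: if_False)
  qed
qed

lemma neg_centre: "negW centreW"
  by (simp add: negW_def herm_def)

lemma orbit_gen: "orbit_pts R p i = gen_prod R i *v p"
  by (induction i) (simp_all add: matrix_vector_mul_assoc)

lemma orbit_cb: assumes "is_Hn_rep n R" "closed_ball_W p" "i \<le> n"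
  shows "closed_ball_W (orbit_pts R p i)"
  using assms(3)
proof (induction i)
  case 0 thus ?case using assms(2) by simp
next
  case (Suc i)
  have "unitaryW (R (Suc i))" using assms(1) Suc.prems by (simp add: is_Hn_rep_def)
  thus ?case using Suc unit_cb by simp
qed

lemma mat_mv: "(mat \<mu> :: matW) *v v = \<mu> *s v"
  by (simp add: vec_eq_iff forall_2 mv1 mv2 mat_def)

lemma area_reindex:
  assumes "n \<ge> 1" "orbit_pts R p n = lam *s p" "lam \<noteq> 0"
  shows "area_rep n R p = (\<Sum>i<n. 2 * Arg (W3 centreW (orbit_pts R p i) (orbit_pts R p (Suc i))))"
proof -
  let ?P = "orbit_pts R p"
  let ?g = "\<lambda>i. 2 * Arg (W3 centreW (?P i) (?P (Suc i)))"
  obtain m where m: "n = Suc m" using assms(1) by (cases n) auto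
  have "area_rep n R p = (\<Sum>k<n. 2 * Arg (W3 centreW (?P (Suc k)) (?P (Suc ((Suc k) mod n)))))"
  proof -
    have nth: "map ?P [1..<n+1] ! k = ?P (Suc k)" if "k < n" for k
      using that by (subst nth_map_upt) auto
    have md: "Suc k mod n < n" for k using assms(1) by simp
    show ?thesis
      unfolding area_rep_def poly_area_def tri_area_eq length_map length_upt
      using nth md by (intro sum.cong) auto
  qed
  also have "\<dots> = (\<Sum>k<m. ?g (Suc k)) + 2 * Arg (W3 centreW (?P n) (?P (Suc 0)))"
    unfolding m by (simp add: sum.lessThan_Suc)
  also have "Arg (W3 centreW (?P n) (?P (Suc 0))) = Arg (W3 centreW p (?P (Suc 0)))"
    unfolding assms(2) W3_scale2 using Arg_scale[OF assms(3)] by simp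
  also have "(\<Sum>k<m. ?g (Suc k)) + 2 * Arg (W3 centreW p (?P (Suc 0))) = (\<Sum>i<n. ?g i)"
    unfolding m sum.lessThan_Suc_shift by simp
  finally show ?thesis .
qed

lemma gen_scalar: assumes "is_Hn_rep n R" "closed_ball_W p"
  obtains lam where "gen_prod R n = mat lam" "lam \<noteq> 0" "orbit_pts R p n = lam *s p"
proof -
  obtain lam where l: "gen_prod R n = mat lam" using assms(1) by (auto simp: is_Hn_rep_def is_scalar_def)
  have e: "orbit_pts R p n = lam *s p" by (simp add: orbit_gen l mat_mv)
  have "closed_ball_W (orbit_pts R p n)" using orbit_cb assms by blast
  hence "lam \<noteq> 0" using e by (auto simp: closed_ball_W_def)
  thus ?thesis using that l e by blast
qed

lemma part1: assumes "n \<ge> 1" "is_Hn_rep n R" "closed_ball_W p" "closed_ball_W q"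
  shows "area_rep n R p = area_rep n R q"
proof -
  obtain lam where l: "gen_prod R n = mat lam" "lam \<noteq> 0" "orbit_pts R p n = lam *s p"
    using gen_scalar assms(2,3) by blast
  have lq: "orbit_pts R q n = lam *s q" by (simp add: orbit_gen l mat_mv)
  let ?P = "orbit_pts R p" and ?Q = "orbit_pts R q"
  define F where "F i = Arg (W3 centreW (?P i) (?Q i))" for i
  have step: "Arg (W3 centreW (?P i) (?P (Suc i))) - Arg (W3 centreW (?Q i) (?Q (Suc i))) = F i - F (Suc i)"
    if "i < n" for i
  proof -
    have u: "unitaryW (R (Suc i))" and "is_scalar (R (Suc i) ** R (Suc i))"
      using assms(2) that by (auto simp: is_Hn_rep_def)
    then obtain \<mu> where mu: "R (Suc i) ** R (Suc i) = mat \<mu>" by (auto simp: is_scalar_def)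
    have "closed_ball_W (?P i)" "closed_ball_W (?Q i)" using orbit_cb assms that by auto
    from key[OF u mu neg_centre this] show ?thesis by (simp add: F_def)
  qed
  have "area_rep n R p - area_rep n R q =
     (\<Sum>i<n. 2 * (Arg (W3 centreW (?P i) (?P (Suc i))) - Arg (W3 centreW (?Q i) (?Q (Suc i)))))"
    using area_reindex[OF assms(1) l(3) l(2)] area_reindex[OF assms(1) lq l(2)]
    by (simp add: sum_subtractf algebra_simps)
  also have "\<dots> = (\<Sum>i<n. 2 * (F i - F (Suc i)))" using step by simp
  also have "\<dots> = 2 * (\<Sum>i<n. F i - F (Suc i))" by (simp add: sum_distrib_left)
  also have "(\<Sum>i<n. F i - F (Suc i)) = F 0 - F n"
    using sum_lessThan_telescope[of "\<lambda>i. - F i" n] by simp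
  also have "F n = F 0"
    unfolding F_def l(3) lq W3_scale2 W3_scale3 Arg_scale[OF l(2)] by simp
  finally show ?thesis by simp
qed




definition d2 :: "matW \<Rightarrow> complex" where "d2 A = A$1$1 * A$2$2 - A$1$2 * A$2$1"

lemma d2_mult: "d2 (A ** B) = d2 A * d2 B"
  by (simp add: d2_def mm algebra_simps)

lemma d2_mat: "d2 (mat c) = c * c"
  by (simp add: d2_def mat_def)

lemma d2_gen: "d2 (gen_prod R k) = (\<Prod>i<k. d2 (R (Suc i)))"
  by (induction k) (simp_all add: d2_mult d2_mat mult.commute)

lemma mat_entries: "(mat c :: matW) $ 1 $ 1 = c" "(mat c :: matW) $ 2 $ 2 = c"
  "(mat c :: matW) $ 1 $ 2 = 0" "(mat c :: matW) $ 2 $ 1 = 0"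
  by (simp_all add: mat_def)

lemma inv_props: assumes "S ** S = mat \<mu>" "\<not> is_scalar S"
  shows "S$2$2 = - S$1$1" "d2 S = - \<mu>"
proof -
  let ?a = "S$1$1" and ?b = "S$1$2" and ?c = "S$2$1" and ?d = "S$2$2"
  have e: "?a * ?b + ?b * ?d = 0" "?c * ?a + ?d * ?c = 0" "?a * ?a + ?b * ?c = \<mu>" "?c * ?b + ?d * ?d = \<mu>"
    using arg_cong[OF assms(1), of "\<lambda>A. A$1$2"] arg_cong[OF assms(1), of "\<lambda>A. A$2$1"]
      arg_cong[OF assms(1), of "\<lambda>A. A$1$1"] arg_cong[OF assms(1), of "\<lambda>A. A$2$2"]
    by (simp_all add: mm mat_entries)
  show t: "?d = - ?a"
  proof (rule ccontr)
    assume "?d \<noteq> - ?a"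
    hence s: "?a + ?d \<noteq> 0" by (metis add.commute neg_eq_iff_add_eq_0)
    have "?b * (?a + ?d) = 0" "?c * (?a + ?d) = 0" using e by (simp_all add: algebra_simps)
    hence bc: "?b = 0" "?c = 0" using s by auto
    hence "(?a - ?d) * (?a + ?d) = 0" using e by (simp add: algebra_simps)
    hence "?a = ?d" using s by simp
    hence "S = mat ?a" using bc by (simp add: vec_eq_iff forall_2 mat_def)
    thus False using assms(2) by (auto simp: is_scalar_def)
  qed
  show "d2 S = - \<mu>" using e t by (simp add: d2_def algebra_simps)
qed

lemma mv_scale: "(S::matW) *v (c *s v) = c *s (S *v v)"
  by (simp add: vec_eq_iff forall_2 mv1 mv2 algebra_simps)

lemma muz: assumes "unitaryW S" "S ** S = mat \<mu>"
  shows "\<mu> \<noteq> 0" "\<mu> * (herm x (S *v x))^2 = of_real ((cmod (herm x (S *v x)))^2)"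
proof -
  let ?e = "(\<chi> i. if i = 1 then 1 else 0) :: vecW"
  have SS: "S *v (S *v v) = \<mu> *s v" for v
    by (simp add: matrix_vector_mul_assoc assms(2) mat_mv)
  have "?e \<noteq> 0" by (simp add: vec_eq_iff forall_2)
  hence "S *v (S *v ?e) \<noteq> 0" using unit_nz assms(1) by blast
  thus mu: "\<mu> \<noteq> 0" using SS by auto
  define z where "z = herm x (S *v x)"
  define w where "w = (1/\<mu>) *s (S *v x)"
  have Sw: "S *v w = x" using mu by (simp add: w_def mv_scale SS)
  have "cnj z = herm (S *v x) x" by (simp add: z_def herm_cnj)
  also have "\<dots> = herm (S *v x) (S *v w)" using Sw by simp
  also have "\<dots> = herm x w" using assms(1) by (simp add: unitaryW_def)
  also have "\<dots> = cnj (1/\<mu>) * z" by (simp add: w_def herm_scaleR z_def)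
  finally have "cnj z = cnj (1/\<mu>) * z" .
  hence "z = (1/\<mu>) * cnj z" by (metis complex_cnj_cnj complex_cnj_mult)
  hence "\<mu> * z = cnj z" using mu by (simp add: field_simps)
  hence "\<mu> * z^2 = z * cnj z" by (metis mult.assoc mult.commute power2_eq_square)
  thus "\<mu> * (herm x (S *v x))^2 = of_real ((cmod (herm x (S *v x)))^2)"
    unfolding z_def[symmetric] complex_norm_square .
qed

lemma real_ineq: fixes A C X Y :: real
  assumes "A^2 = 1 + C^2" "0 \<le> A" "0 \<le> C" "0 \<le> X" "0 \<le> Y" "X \<noteq> 0 \<or> Y \<noteq> 0"
  shows "2 * (A * C * X * Y) < A^2 * (X^2 + Y^2)"
proof -
  have AC: "C < A" using assms(1-3) by (smt (verit) power_mono)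
  have A: "0 < A" using AC assms by simp
  have q: "0 < X^2 + Y^2" using assms(6) by (auto simp: add_pos_nonneg add_nonneg_pos)
  have "2 * C * X * Y \<le> C * (X^2 + Y^2)"
    using assms(3) mult_left_mono[of "2*X*Y" "X^2+Y^2" C] sum_squares_bound[of X Y] by (simp add: mult_ac)
  also have "\<dots> < A * (X^2 + Y^2)" using AC q by simp
  finally have "2 * C * X * Y < A * (X^2 + Y^2)" .
  hence "A * (2 * C * X * Y) < A * (A * (X^2 + Y^2))" using A by simp
  thus ?thesis by (simp add: power2_eq_square mult_ac)
qed

lemma z_nz: assumes "unitaryW S" "S$2$2 = - S$1$1" "x \<noteq> 0"
  shows "herm x (S *v x) \<noteq> 0"
proof -
  let ?a = "S$1$1" and ?b = "S$1$2" and ?c = "S$2$1"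
  let ?e1 = "(\<chi> i. if i = 1 then 1 else 0) :: vecW" and ?e2 = "(\<chi> i. if i = 1 then 0 else 1) :: vecW"
  have u1: "herm (S *v ?e1) (S *v ?e1) = herm ?e1 ?e1" and u2: "herm (S *v ?e1) (S *v ?e2) = herm ?e1 ?e2"
    using assms(1) by (simp_all add: unitaryW_def)
  have r1: "?a * cnj ?a - ?c * cnj ?c = 1" using u1 by (simp add: herm_def mv1 mv2)
  have r2: "?a * cnj ?b + ?c * cnj ?a = 0" using u2 assms(2) by (simp add: herm_def mv1 mv2)
  define z where "z = herm x (S *v x)"
  define P where "P = ?c * cnj ?a * x$1 * cnj (x$2)"
  have az: "?a * z = ?a * cnj ?a * (x$1 * cnj (x$1) + x$2 * cnj (x$2)) - (P + cnj P)"
  proof -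
    have "?a * z = ?a * cnj ?a * (x$1 * cnj (x$1) + x$2 * cnj (x$2)) + (?a * cnj ?b) * x$1 * cnj (x$2)
        - ?a * cnj ?c * cnj (x$1) * x$2"
      by (simp add: z_def herm_def mv1 mv2 assms(2) algebra_simps)
    also have "\<dots> = ?a * cnj ?a * (x$1 * cnj (x$1) + x$2 * cnj (x$2)) - (P + cnj P)"
      using r2 by (simp add: P_def algebra_simps eq_neg_iff_add_eq_0[symmetric])
    finally show ?thesis .
  qed
  have Re1: "Re (?a * z) = (cmod ?a)^2 * ((cmod (x$1))^2 + (cmod (x$2))^2) - 2 * Re P"
    unfolding az by (simp add: complex_norm_square[symmetric] del: of_real_power)
  have RP: "Re P \<le> cmod ?a * cmod ?c * cmod (x$1) * cmod (x$2)"
    using complex_Re_le_cmod[of P] by (simp add: P_def norm_mult mult_ac)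
  have ac: "(cmod ?a)^2 = 1 + (cmod ?c)^2"
  proof -
    have "of_real ((cmod ?a)^2) - of_real ((cmod ?c)^2) = (1::complex)"
      using r1 by (simp add: complex_norm_square[symmetric] del: of_real_power)
    hence "(cmod ?a)^2 - (cmod ?c)^2 = 1" by (metis of_real_1 of_real_diff of_real_eq_iff)
    thus ?thesis by simp
  qed
  have "x$1 \<noteq> 0 \<or> x$2 \<noteq> 0" using assms(3) by (auto simp: vec_eq_iff forall_2)
  hence "2 * (cmod ?a * cmod ?c * cmod (x$1) * cmod (x$2)) < (cmod ?a)^2 * ((cmod (x$1))^2 + (cmod (x$2))^2)"
    by (intro real_ineq ac) auto
  hence "0 < Re (?a * z)" using Re1 RP by linarith
  thus ?thesis unfolding z_def by auto
qed




lemma cis_sum: "cis (\<Sum>i<(n::nat). f i) = (\<Prod>i<n. cis (f i))"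
  by (induction n) (simp_all add: cis_mult[symmetric])

lemma sgn_prod: "sgn (\<Prod>i<(n::nat). f i :: complex) = (\<Prod>i<n. sgn (f i))"
  by (induction n) (simp_all add: sgn_mult)

lemma sgn_m1: "sgn ((-1::complex)^n) = (-1)^n"
  by (simp add: sgn_div_norm norm_power)

lemma prod_shift: "(\<Prod>i<n. f (Suc i)) * f 0 = (\<Prod>i<n. f i) * (f n :: complex)"
  by (induction n) (simp_all add: mult_ac)

lemma part2: assumes "n \<ge> 1" "is_Hn_rep n R" "\<forall>i\<in>{1..n}. \<not> is_scalar (R i)" "closed_ball_W p"
  shows "\<exists>k::int. area_rep n R p = real n * pi + 2 * pi * of_int k"
proof -
  obtain lam where l: "gen_prod R n = mat lam" "lam \<noteq> 0" "orbit_pts R p n = lam *s p"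
    using gen_scalar assms(2,4) by blast
  let ?P = "orbit_pts R p"
  define mu where "mu i = (R (Suc i) ** R (Suc i))$1$1" for i
  have u: "unitaryW (R (Suc i))" if "i < n" for i using assms(2) that by (simp add: is_Hn_rep_def)
  have muS: "R (Suc i) ** R (Suc i) = mat (mu i)" if "i < n" for i
  proof -
    have "Suc i \<in> {1..n}" using that by simp
    hence "is_scalar (R (Suc i) ** R (Suc i))" using assms(2) by (simp add: is_Hn_rep_def)
    then obtain c where "R (Suc i) ** R (Suc i) = mat c" by (auto simp: is_scalar_def)
    thus ?thesis by (simp add: mu_def mat_entries)
  qed
  have ns: "\<not> is_scalar (R (Suc i))" if "i < n" for i using assms(3) that by simp
  have cbP: "closed_ball_W (?P i)" if "i \<le> n" for i using orbit_cb assms(2,4) that by blast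
  define z where "z i = herm (?P i) (R (Suc i) *v ?P i)" for i
  define h where "h i = herm centreW (?P i)" for i
  define w where "w i = W3 centreW (?P i) (?P (Suc i))" for i
  have wd: "w i = - (h i * z i * cnj (h (Suc i)))" for i
    by (simp add: w_def W3_def h_def z_def herm_cnj)
  have znz: "z i \<noteq> 0" if "i < n" for i
    using z_nz[OF u[OF that] inv_props(1)[OF muS[OF that] ns[OF that]]] cbP[of i] that
    by (auto simp: z_def closed_ball_W_def)
  have hnz: "h i \<noteq> 0" if "i \<le> n" for i using neg_orth[OF neg_centre cbP[OF that]] by (simp add: h_def)
  have wnz: "w i \<noteq> 0" if "i < n" for i using znz hnz that by (simp add: wd)
  have mz: "mu i * (z i)^2 = of_real ((cmod (z i))^2)" if "i < n" for i
    using muz(2)[OF u[OF that] muS[OF that]] by (simp add: z_def)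
  have det: "lam * lam = (-1)^n * (\<Prod>i<n. mu i)"
  proof -
    have "lam * lam = (\<Prod>i<n. d2 (R (Suc i)))" using d2_gen[of R n] l(1) by (simp add: d2_mat)
    also have "\<dots> = (\<Prod>i<n. - mu i)" using inv_props(2)[OF muS ns] by simp
    finally show ?thesis by (simp add: prod_uminus)
  qed
  have hn: "cnj (h n) = lam * cnj (h 0)" by (simp add: h_def l(3) herm_scaleR)
  have sh: "(\<Prod>i<n. cnj (h (Suc i))^2) = (\<Prod>i<n. cnj (h i)^2) * (lam * lam)"
  proof -
    have "(\<Prod>i<n. cnj (h (Suc i))^2) * cnj (h 0)^2 = (\<Prod>i<n. cnj (h i)^2) * cnj (h n)^2"
      by (rule prod_shift)
    also have "\<dots> = ((\<Prod>i<n. cnj (h i)^2) * (lam * lam)) * cnj (h 0)^2"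
      by (simp add: hn power2_eq_square mult_ac)
    finally show ?thesis using hnz[of 0] by simp
  qed
  define G where "G = (\<Prod>i<n. ((cmod (h i))^2)^2)"
  define Z where "Z = (\<Prod>i<n. (cmod (z i))^2)"
  have Gp: "0 < G" unfolding G_def using hnz by (intro prod_pos) auto
  have Zp: "0 < Z" unfolding Z_def using znz by (intro prod_pos) auto
  have Zmu: "(\<Prod>i<n. (z i)^2) * (\<Prod>i<n. mu i) = of_real Z"
  proof -
    have "(\<Prod>i<n. (z i)^2) * (\<Prod>i<n. mu i) = (\<Prod>i<n. mu i * (z i)^2)"
      by (simp add: prod.distrib mult_ac)
    also have "\<dots> = (\<Prod>i<n. of_real ((cmod (z i))^2))" using mz by (intro prod.cong) auto
    finally show ?thesis by (simp add: Z_def del: of_real_power)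
  qed
  have hG: "(\<Prod>i<n. (h i)^2 * cnj (h i)^2) = of_real G"
  proof -
    have "(h i)^2 * cnj (h i)^2 = of_real (((cmod (h i))^2)^2)" for i
    proof -
      have "of_real (((cmod (h i))^2)^2) = (of_real ((cmod (h i))^2) :: complex)^2" by (simp only: of_real_power)
      also have "\<dots> = (h i * cnj (h i))^2" by (simp only: complex_norm_square)
      finally show ?thesis by (simp add: power_mult_distrib)
    qed
    thus ?thesis by (simp add: G_def del: of_real_power)
  qed
  have W: "(\<Prod>i<n. (w i)^2) = (-1)^n * of_real (G * Z)"
  proof -
    have "(\<Prod>i<n. (w i)^2) = (\<Prod>i<n. (h i)^2 * (z i)^2 * cnj (h (Suc i))^2)"
      by (simp add: wd power_mult_distrib)
    also have "\<dots> = (\<Prod>i<n. (h i)^2) * (\<Prod>i<n. (z i)^2) * (\<Prod>i<n. cnj (h (Suc i))^2)"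
      by (simp add: prod.distrib)
    also have "\<dots> = (\<Prod>i<n. (h i)^2 * cnj (h i)^2) * ((\<Prod>i<n. (z i)^2) * (lam * lam))"
      by (simp add: sh prod.distrib mult_ac)
    also have "\<dots> = of_real G * ((-1)^n * of_real Z)"
      using Zmu by (simp add: hG det mult_ac)
    finally show ?thesis by (simp add: mult_ac)
  qed
  have area: "area_rep n R p = (\<Sum>i<n. 2 * Arg (w i))"
    using area_reindex[OF assms(1) l(3) l(2)] by (simp add: w_def)
  have "cis (area_rep n R p) = (\<Prod>i<n. cis (2 * Arg (w i)))" by (simp add: area cis_sum)
  also have "\<dots> = (\<Prod>i<n. sgn ((w i)^2))"
  proof (intro prod.cong refl)
    fix i assume "i \<in> {..<n}"
    hence "w i \<noteq> 0" using wnz by simp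
    have "cis (2 * Arg (w i)) = cis (Arg (w i)) * cis (Arg (w i))" by (simp add: cis_mult)
    also have "\<dots> = sgn ((w i)^2)" using \<open>w i \<noteq> 0\<close> by (simp add: cis_Arg sgn_mult power2_eq_square)
    finally show "cis (2 * Arg (w i)) = sgn ((w i)^2)" .
  qed
  also have "\<dots> = sgn (\<Prod>i<n. (w i)^2)" by (simp add: sgn_prod)
  also have "\<dots> = (-1)^n"
    unfolding W using Gp Zp by (simp add: sgn_mult sgn_of_real sgn_m1)
  also have "\<dots> = cis (real n * pi)" by (metis Complex.DeMoivre cis_pi)
  finally have c: "cis (area_rep n R p) = cis (real n * pi)" .
  have "cis (area_rep n R p - real n * pi) = 1" using c cis_divide[of "area_rep n R p" "real n * pi"] by simp
  hence "cos (area_rep n R p - real n * pi) = 1" by (metis cis.sel(1) one_complex.sel(1))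
  then obtain m :: int where "area_rep n R p - real n * pi = of_int m * 2 * pi" using cos_one_2pi_int by blast
  hence "area_rep n R p = real n * pi + 2 * pi * of_int m" by (simp add: algebra_simps)
  thus ?thesis by blast
qed

theorem lemma3p2:
  fixes n :: nat and R :: "nat \<Rightarrow> matW"
  assumes "n \<ge> 5" and "is_Hn_rep n R"
  shows "(\<forall>p q. closed_ball_W p \<longrightarrow> closed_ball_W q \<longrightarrow> area_rep n R p = area_rep n R q)
       \<and> ((\<forall>i\<in>{1..n}. \<not> is_scalar (R i)) \<longrightarrow>
            (\<forall>p. closed_ball_W p \<longrightarrow> (\<exists>k::int. area_rep n R p = real n * pi + 2 * pi * of_int k)))"
proof -
  have n1: "n \<ge> 1" using assms(1) by simp
  show ?thesis using part1[OF n1 assms(2)] part2[OF n1 assms(2)] by blast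
qed


end
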